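(* Let $a>b\geq c>d>0$ and let $p,q$ be real numbers with $p,q\notin\{0,-1\}$. If $ad-bc>0$, then $$\left(\frac{L_p(a,b)}{L_p(c,d)}\right)^p\geq \left(\frac{L_q(a,b)}{L_q(c,d)}\right)^q\left(\frac{I(a^{q+1},b^{q+1})}{I(c^{q+1},d^{q+1})}\right)^{\frac{p-q}{q+1}}.$$ If $ad-bc<0$, the reverse inequality holds. Equality holds if and only if $ad-bc=0$ or $p=q$.
   Context: For $u,v>0$: the identric mean is $I(u,v)=\frac{1}{e}\left(\frac{u^u}{v^v}\right)^{1/(u-v)}$ if $u\neq v$ and $I(u,u)=u$; for $p\neq 0,-1$ the $p$-logarithmic mean is $L_p(u,v)=\left(\frac{u^{p+1}-v^{p+1}}{(p+1)(u-v)}\right)^{1/p}$ if $u\neq v$ and $L_p(u,u)=u$. *)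

theory Defs
  imports Complex_Main
begin

definition identric :: "real \<Rightarrow> real \<Rightarrow> real" where
  "identric u v = (if u = v then u
     else (1 / exp 1) * ((u powr u) / (v powr v)) powr (1 / (u - v)))"

definition plog_mean :: "real \<Rightarrow> real \<Rightarrow> real \<Rightarrow> real" where
  "plog_mean p u v = (if u = v then u
     else ((u powr (p + 1) - v powr (p + 1)) / ((p + 1) * (u - v))) powr (1 / p))"

end

theory Submission
  imports Defs
begin


lemma exp_pm_gt2: "x \<noteq> 0 \<Longrightarrow> exp x + exp (-x) > (2::real)"
proof -
  assume x: "x \<noteq> 0"
  have "exp x \<noteq> 1" using x by simp
  hence "(exp x - 1)^2 > 0" by simp
  hence "(exp x - 1)^2 / exp x > 0" by simp
  moreover have "(exp x - 1)^2 / exp x = exp x + exp (-x) - 2"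
    by (simp add: exp_minus field_simps power2_eq_square)
  ultimately show ?thesis by simp
qed

lemma sinh_gt: "x > 0 \<Longrightarrow> exp x - exp (-x) > 2 * (x::real)"
proof -
  assume x: "x > 0"
  have "(\<lambda>t. exp t - exp (-t) - 2*t) 0 < (\<lambda>t. exp t - exp (-t) - 2*t) x"
  proof (rule DERIV_pos_imp_increasing_open[OF x])
    fix t :: real assume "0 < t" "t < x"
    hence t: "t \<noteq> 0" by simp
    show "\<exists>y. ((\<lambda>t. exp t - exp (-t) - 2*t) has_real_derivative y) (at t) \<and> y > 0"
        apply (rule exI[of _ "exp t + exp (-t) - 2"])
        apply (intro conjI)
         apply (auto intro!: derivative_eq_intros)
        using exp_pm_gt2[OF t] by simp
  qed (intro continuous_intros)
  thus ?thesis by simp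
qed

lemma cosh_gt: "t > 0 \<Longrightarrow> t * (exp t + exp (-t)) > exp t - exp (-(t::real))"
proof -
  assume x: "t > 0"
  have "(\<lambda>t. t * (exp t + exp (-t)) - (exp t - exp (-t))) 0 < (\<lambda>t. t * (exp t + exp (-t)) - (exp t - exp (-t))) t"
  proof (rule DERIV_pos_imp_increasing_open[OF x])
    fix u :: real assume u: "0 < u" "u < t"
    have "exp (-u) < exp u" using u by simp
    hence pos: "u * (exp u - exp (-u)) > 0" using u by (intro mult_pos_pos) auto
    show "\<exists>y. ((\<lambda>t. t * (exp t + exp (-t)) - (exp t - exp (-t))) has_real_derivative y) (at u) \<and> y > 0"
        apply (rule exI[of _ "u * (exp u - exp (-u))"])
        apply (intro conjI)
         apply (rule derivative_eq_intros refl | simp)+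
         apply (simp add: algebra_simps)
        using pos by (simp add: algebra_simps)
  qed (intro continuous_intros)
  thus ?thesis by simp
qed

definition R :: "real \<Rightarrow> real" where "R y = (exp y - exp (-y)) / y"

lemma R_mono: "0 < y \<Longrightarrow> y < x \<Longrightarrow> R y < R x"
proof -
  assume y: "0 < y" and yx: "y < x"
  show ?thesis unfolding R_def
  proof (rule DERIV_pos_imp_increasing[OF yx])
    fix t assume t: "y \<le> t" "t \<le> x"
    hence t0: "t > 0" using y by simp
    have np: "(t * (exp t + exp (-t)) - (exp t - exp (-t))) > 0"
      using cosh_gt[OF t0] t0 by simp
    show "\<exists>d. ((\<lambda>y. (exp y - exp (- y)) / y) has_real_derivative d) (at t) \<and> 0 < d"
      apply (rule exI[of _ "(t * (exp t + exp (-t)) - (exp t - exp (-t))) / (t*t)"])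
      apply (intro conjI)
      using t0 apply (auto intro!: derivative_eq_intros simp: field_simps)[1]
      apply (rule divide_pos_pos)
      using np t0 by (simp_all add: algebra_simps)
  qed
qed

definition V :: "real \<Rightarrow> real" where "V x = x * (exp x + 1) / (exp x - 1)"

lemma V_mono: "0 < y \<Longrightarrow> y < x \<Longrightarrow> V y < V x"
proof -
  assume y: "0 < y" and yx: "y < x"
  show ?thesis unfolding V_def
  proof (rule DERIV_pos_imp_increasing[OF yx])
    fix t assume t: "y \<le> t" "t \<le> x"
    hence t0: "t > 0" using y by simp
    have e1: "exp t - 1 > 0" using t0 by simp
    have "exp t * (exp t - exp (-t) - 2 * t) > 0" using sinh_gt[OF t0] by simp
    moreover have "exp t * (exp t - exp (-t) - 2 * t) = exp t * exp t - 1 - 2 * t * exp t"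
      by (simp add: exp_minus field_simps)
    ultimately have np: "(exp t * exp t - 1 - 2 * t * exp t) > 0"
      by simp
    show "\<exists>d. ((\<lambda>x. x * (exp x + 1) / (exp x - 1)) has_real_derivative d) (at t) \<and> 0 < d"
      apply (rule exI[of _ "(exp t * exp t - 1 - 2 * t * exp t) / ((exp t - 1)*(exp t - 1))"])
      apply (intro conjI)
      using e1 apply (auto intro!: derivative_eq_intros simp: field_simps)[1]
      apply (rule divide_pos_pos)
      using np apply (simp add: algebra_simps)
      using e1 by simp
  qed
qed

lemma V_even: "V (-x) = V x"
proof (cases "x = 0")
  case False
  hence e: "exp x \<noteq> 1" by simp
  have a: "exp (-x) + 1 = (1 + exp x) / exp x" by (simp add: exp_minus field_simps)
  have b: "exp (-x) - 1 = (1 - exp x) / exp x" by (simp add: exp_minus field_simps)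
  have c: "1 - exp x \<noteq> 0" "exp x - 1 \<noteq> 0" using e by auto
  have "V (-x) = -x * ((1 + exp x) / exp x) / ((1 - exp x) / exp x)"
    unfolding V_def a b by simp
  also have "\<dots> = V x" unfolding V_def using c by (simp add: field_simps)
  finally show ?thesis .
qed simp


lemma fr1: "X \<noteq> 0 \<Longrightarrow> Y \<noteq> (0::real) \<Longrightarrow> Z = P*Y - Q*X \<Longrightarrow> 1/(X/Y) * (Z/(Y*Y)) = P/X - Q/Y"
  by (simp add: field_simps)
lemma fr2: "X \<noteq> 0 \<Longrightarrow> Z = - W \<Longrightarrow> Z/(X*X) = - (W / X^2::real)"
  by (simp add: power2_eq_square)

definition Mf :: "real \<Rightarrow> real \<Rightarrow> real \<Rightarrow> real" where
  "Mf a b s = (exp (s*a) * a - exp (s*b) * b) / (exp (s*a) - exp (s*b))"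
definition Hf :: "real \<Rightarrow> real \<Rightarrow> real \<Rightarrow> real \<Rightarrow> real \<Rightarrow> real" where
  "Hf a b c d s = ln ((exp (s*a) - exp (s*b)) / (exp (s*c) - exp (s*d)))"
definition Hd :: "real \<Rightarrow> real \<Rightarrow> real \<Rightarrow> real \<Rightarrow> real \<Rightarrow> real" where
  "Hd a b c d s = Mf a b s - Mf c d s"
definition T :: "real \<Rightarrow> real \<Rightarrow> real" where
  "T l s = l / (exp (s*l/2) - exp (-(s*l/2)))"

lemma diff_ne: "b < a \<Longrightarrow> s \<noteq> 0 \<Longrightarrow> exp (s*a) - exp (s*b) \<noteq> (0::real)"
  by (auto)

lemma ratio_pos: "b < a \<Longrightarrow> d < c \<Longrightarrow> s \<noteq> 0 \<Longrightarrow>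
   (exp (s*a) - exp (s*b)) / (exp (s*c) - exp (s*d)) > (0::real)"
proof -
  assume h: "b < a" "d < c" "s \<noteq> 0"
  show ?thesis
  proof (cases "s > 0")
    case True
    then have "exp (s*b) < exp (s*a)" "exp (s*d) < exp (s*c)" using h by auto
    then show ?thesis by (intro divide_pos_pos) auto
  next
    case False
    then have "s < 0" using h by simp
    then have "exp (s*b) > exp (s*a)" "exp (s*d) > exp (s*c)" using h by auto
    then show ?thesis by (intro divide_neg_neg) auto
  qed
qed

lemma Hf_deriv: "b < a \<Longrightarrow> d < c \<Longrightarrow> s \<noteq> 0 \<Longrightarrow> (Hf a b c d has_real_derivative Hd a b c d s) (at s)"
proof -
  assume h: "b < a" "d < c" "s \<noteq> 0"
  note r = ratio_pos[OF h]
  have n1: "exp (s*a) - exp (s*b) \<noteq> 0" and n2: "exp (s*c) - exp (s*d) \<noteq> 0"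
    using diff_ne h by auto
  show ?thesis unfolding Hf_def[abs_def] Hd_def Mf_def
    apply (rule derivative_eq_intros refl | rule r | rule n2)+
    apply (rule fr1[OF n1 n2])
    by (simp add: algebra_simps)
qed

lemma Mf_deriv: "b < a \<Longrightarrow> s \<noteq> 0 \<Longrightarrow>
   (Mf a b has_real_derivative - (exp (s*a) * exp (s*b) * (a-b)^2 / (exp (s*a) - exp (s*b))^2)) (at s)"
proof -
  assume h: "b < a" "s \<noteq> 0"
  have n1: "exp (s*a) - exp (s*b) \<noteq> 0" using diff_ne h by auto
  show ?thesis unfolding Mf_def[abs_def]
    apply (rule derivative_eq_intros refl)+
    using n1 apply simp
    apply (rule fr2[OF n1])
    by (simp add: algebra_simps power2_eq_square)
qed

lemma Mf_deriv_T: "b < a \<Longrightarrow> s \<noteq> 0 \<Longrightarrow>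
   exp (s*a) * exp (s*b) * (a-b)^2 / (exp (s*a) - exp (s*b))^2 = (T (a-b) s)^2"
proof -
  assume h: "b < a" "s \<noteq> 0"
  define m where "m = exp (s*(a+b)/2)"
  define u where "u = exp (s*(a-b)/2)"
  define v where "v = exp (-(s*(a-b)/2))"
  have ea: "exp (s*a) = m*u" unfolding m_def u_def exp_add[symmetric]
    by (rule arg_cong[where f=exp]) (simp add: field_simps)
  have eb: "exp (s*b) = m*v" unfolding m_def v_def exp_add[symmetric]
    by (rule arg_cong[where f=exp]) (simp add: field_simps)
  have uv: "u*v = 1" unfolding u_def v_def by (simp add: exp_add[symmetric])
  have m0: "m > 0" unfolding m_def by simp
  have n1: "exp (s*a) - exp (s*b) \<noteq> 0" using diff_ne h by auto
  hence uv0: "u - v \<noteq> 0" unfolding ea eb by auto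
  have T: "T (a-b) s = (a-b) / (u - v)" unfolding T_def u_def v_def by (simp add: algebra_simps)
  have "exp (s*a) * exp (s*b) * (a-b)^2 / (exp (s*a) - exp (s*b))^2
      = (m*m) * (u*v) * (a-b)^2 / ((m*m) * (u-v)^2)"
    unfolding ea eb by (simp add: algebra_simps power2_eq_square)
  also have "\<dots> = (a-b)^2 / (u-v)^2" using m0 uv by simp
  also have "\<dots> = (T (a-b) s)^2" unfolding T by (simp add: power_divide)
  finally show ?thesis .
qed

lemma R_pos: "y > 0 \<Longrightarrow> R y > 0"
  unfolding R_def using sinh_gt[of y] by simp

lemma T_R: "s > 0 \<Longrightarrow> l > 0 \<Longrightarrow> T l s = 2 / (s * R (s*l/2))"
proof -
  assume h: "s > 0" "l > 0"
  have "exp (s*l/2) - exp (-(s*l/2)) > 0" using sinh_gt[of "s*l/2"] h by simp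
  then show ?thesis unfolding T_def R_def using h by (simp add: field_simps)
qed

lemma T_neg: "T l (-s) = - T l s"
  unfolding T_def by (simp add: divide_simps algebra_simps) 

lemma T_sq_less: "0 < l2 \<Longrightarrow> l2 < l1 \<Longrightarrow> s \<noteq> 0 \<Longrightarrow> (T l1 s)^2 < (T l2 s)^2"
proof -
  assume h: "0 < l2" "l2 < l1" "s \<noteq> 0"
  have pos: "(T l1 s)^2 < (T l2 s)^2" if s: "s > 0" for s
  proof -
    have r: "0 < R (s*l2/2)" "R (s*l2/2) < R (s*l1/2)"
      using R_pos R_mono h s by auto
    have "0 < 2 / (s * R (s*l1/2))" using r s by simp
    moreover have "2 / (s * R (s*l1/2)) < 2 / (s * R (s*l2/2))"
      using r s by (intro divide_strict_left_mono mult_strict_left_mono) auto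
    ultimately show ?thesis using T_R[OF s] h
      by (simp add: power_strict_mono)
  qed
  show ?thesis
  proof (cases "s > 0")
    case True then show ?thesis using pos by blast
  next
    case False
    hence "-s > 0" using h by simp
    from pos[OF this] show ?thesis by (simp add: T_neg)
  qed
qed

lemma Hd_deriv: "b < a \<Longrightarrow> d < c \<Longrightarrow> s \<noteq> 0 \<Longrightarrow>
  (Hd a b c d has_real_derivative ((T (c-d) s)^2 - (T (a-b) s)^2)) (at s)"
proof -
  assume h: "b < a" "d < c" "s \<noteq> 0"
  have "(Hd a b c d has_real_derivative
     (- (exp (s*a) * exp (s*b) * (a-b)^2 / (exp (s*a) - exp (s*b))^2)) -
     (- (exp (s*c) * exp (s*d) * (c-d)^2 / (exp (s*c) - exp (s*d))^2))) (at s)"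
    unfolding Hd_def[abs_def]
    by (intro DERIV_diff Mf_deriv h)
  then show ?thesis using Mf_deriv_T[of b a s] Mf_deriv_T[of d c s] h by simp
qed

lemma Hd_mono_side: "b < a \<Longrightarrow> d < c \<Longrightarrow> c - d < a - b \<Longrightarrow> s < t \<Longrightarrow> (0 < s \<or> t < 0)
   \<Longrightarrow> Hd a b c d s < Hd a b c d t"
proof -
  assume h: "b < a" "d < c" "c - d < a - b" "s < t" "0 < s \<or> t < 0"
  show ?thesis
  proof (rule DERIV_pos_imp_increasing[OF h(4)])
    fix x assume x: "s \<le> x" "x \<le> t"
    hence x0: "x \<noteq> 0" using h(5) by auto
    show "\<exists>y. (Hd a b c d has_real_derivative y) (at x) \<and> 0 < y"
      using Hd_deriv[OF h(1,2) x0] T_sq_less[of "c-d" "a-b" x] h x0 by auto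
  qed
qed

lemma Mf_V: "b < a \<Longrightarrow> s \<noteq> 0 \<Longrightarrow> 2 * s * (Mf a b s - (a+b)/2) = V (s*(a-b))"
proof -
  assume h: "b < a" "s \<noteq> 0"
  define e where "e = exp (s*(a-b))"
  define B where "B = exp (s*b)"
  have A: "exp (s*a) = B * e" unfolding B_def e_def by (simp add: exp_add[symmetric] algebra_simps)
  have e1: "e - 1 \<noteq> 0" unfolding e_def using h by simp
  have B0: "B > 0" unfolding B_def by simp
  have "Mf a b s = (B*(e*a - b))/(B*(e - 1))" unfolding Mf_def A B_def[symmetric]
    by (simp add: algebra_simps)
  also have "\<dots> = (e*a - b)/(e - 1)" using B0 by simp
  finally have Mfe: "Mf a b s = (e*a - b)/(e - 1)" .
  show ?thesis unfolding V_def e_def[symmetric] Mfe using e1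
    by (simp add: field_simps)
qed

lemma Hd_L0: "b < a \<Longrightarrow> d < c \<Longrightarrow> c - d < a - b \<Longrightarrow> s \<noteq> 0 \<Longrightarrow>
   s * (Hd a b c d s - (a+b-c-d)/2) > 0"
proof -
  assume h: "b < a" "d < c" "c - d < a - b" "s \<noteq> 0"
  have "2 * (s * (Hd a b c d s - (a+b-c-d)/2)) = 2 * s * (Mf a b s - (a+b)/2) - 2 * s * (Mf c d s - (c+d)/2)"
    unfolding Hd_def by (simp add: field_simps)
  also have "\<dots> = V (s*(a-b)) - V (s*(c-d))"
    using Mf_V[of b a s] Mf_V[of d c s] h by simp
  finally have eq: "2 * (s * (Hd a b c d s - (a+b-c-d)/2)) = V (s*(a-b)) - V (s*(c-d))" .
  have "V (s*(c-d)) < V (s*(a-b))"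
  proof (cases "s > 0")
    case True then show ?thesis using h by (intro V_mono) auto
  next
    case False
    hence s: "-s > 0" using h by simp
    have p1: "0 < (-s)*(c-d)" using h s by (intro mult_pos_pos) auto
    have p2: "(-s)*(c-d) < (-s)*(a-b)" using h s by (intro mult_strict_left_mono) auto
    have "V ((-s)*(c-d)) < V ((-s)*(a-b))" using p1 p2 by (rule V_mono)
    then show ?thesis using V_even[of "s*(c-d)"] V_even[of "s*(a-b)"] by simp
  qed
  then show ?thesis using eq by simp
qed


lemma Hd_mono: "b < a \<Longrightarrow> d < c \<Longrightarrow> c - d < a - b \<Longrightarrow> s < t \<Longrightarrow> s \<noteq> 0 \<Longrightarrow> t \<noteq> 0
   \<Longrightarrow> Hd a b c d s < Hd a b c d t"
proof -
  assume h: "b < a" "d < c" "c - d < a - b" "s < t" "s \<noteq> 0" "t \<noteq> 0"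
  show ?thesis
  proof (cases "0 < s \<or> t < 0")
    case True then show ?thesis using Hd_mono_side h by blast
  next
    case False
    hence st: "s < 0" "0 < t" using h by auto
    have 1: "s * (Hd a b c d s - (a+b-c-d)/2) > 0" using Hd_L0 h by blast
    have 2: "t * (Hd a b c d t - (a+b-c-d)/2) > 0" using Hd_L0 h by blast
    have "Hd a b c d s - (a+b-c-d)/2 < 0" using 1 st by (simp add: zero_less_mult_iff)
    moreover have "Hd a b c d t - (a+b-c-d)/2 > 0" using 2 st by (simp add: zero_less_mult_iff)
    ultimately show ?thesis by simp
  qed
qed

lemma ln_mult_exp: "P > 0 \<Longrightarrow> ln (P * exp w) = ln P + (w::real)"
  by (simp add: ln_mult)

lemma Hf_even: "b < a \<Longrightarrow> d < c \<Longrightarrow> s \<noteq> 0 \<Longrightarrow> Hf a b c d s - Hf a b c d (-s) = s * (a+b-c-d)"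
proof -
  assume h: "b < a" "d < c" "s \<noteq> 0"
  define X where "X = exp (s*(a+b))"
  define Y where "Y = exp (s*(c+d))"
  have X0: "X > 0" "Y > 0" unfolding X_def Y_def by auto
  have e1: "exp ((-s)*a) = exp (s*b) / X" "exp ((-s)*b) = exp (s*a) / X"
    unfolding X_def by (simp_all add: exp_diff[symmetric] algebra_simps)
  have e2: "exp ((-s)*c) = exp (s*d) / Y" "exp ((-s)*d) = exp (s*c) / Y"
    unfolding Y_def by (simp_all add: exp_diff[symmetric] algebra_simps)
  have n2: "exp (s*c) - exp (s*d) \<noteq> 0" using diff_ne h by auto
  have r: "(exp ((-s)*a) - exp ((-s)*b)) / (exp ((-s)*c) - exp ((-s)*d))
     = ((exp (s*a) - exp (s*b)) / (exp (s*c) - exp (s*d))) * (Y / X)"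
    unfolding e1 e2 using X0 n2 by (simp add: field_simps)
  have YX: "Y / X = exp (s*(c+d) - s*(a+b))" unfolding X_def Y_def by (simp add: exp_diff)
  have "Hf a b c d (-s) = Hf a b c d s + (s*(c+d) - s*(a+b))"
    unfolding Hf_def r YX using ratio_pos[OF h] by (rule ln_mult_exp)
  then show ?thesis by (simp add: algebra_simps)
qed

lemma MVT_Hf: "b < a \<Longrightarrow> d < c \<Longrightarrow> u < v \<Longrightarrow> (0 < u \<or> v < 0) \<Longrightarrow>
   \<exists>z. u < z \<and> z < v \<and> Hf a b c d v - Hf a b c d u = (v - u) * Hd a b c d z"
proof -
  assume h: "b < a" "d < c" "u < v" "0 < u \<or> v < 0"
  show ?thesis
  proof (rule MVT2[OF h(3)])
    fix x assume "u \<le> x" "x \<le> v"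
    hence "x \<noteq> 0" using h by auto
    then show "(Hf a b c d has_real_derivative Hd a b c d x) (at x)" using Hf_deriv h by blast
  qed
qed


lemma tangent: "b < a \<Longrightarrow> d < c \<Longrightarrow> c - d < a - b \<Longrightarrow> x \<noteq> 0 \<Longrightarrow> y \<noteq> 0 \<Longrightarrow> x \<noteq> y \<Longrightarrow>
   Hf a b c d x - Hf a b c d y > (x - y) * Hd a b c d y"
proof -
  assume h: "b < a" "d < c" "c - d < a - b" "x \<noteq> 0" "y \<noteq> 0" "x \<noteq> y"
  let ?H = "Hf a b c d" and ?D = "Hd a b c d"
  let ?L = "(a+b-c-d)/2"
  consider "y < x" "0 < y \<or> x < 0" | "x < y" "0 < x \<or> y < 0" | "y < 0" "0 < x" | "x < 0" "0 < y"
    using h by linarith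
  then show ?thesis
  proof cases
    case 1
    obtain z where z: "y < z" "z < x" "?H x - ?H y = (x - y) * ?D z"
      using MVT_Hf[OF h(1,2) 1] by blast
    have "?D y < ?D z" using Hd_mono[OF h(1-3) z(1) h(5)] z 1 by auto
    hence "(x - y) * ?D y < (x - y) * ?D z" using 1 by (intro mult_strict_left_mono) auto
    then show ?thesis using z by simp
  next
    case 2
    obtain z where z: "x < z" "z < y" "?H y - ?H x = (y - x) * ?D z"
      using MVT_Hf[OF h(1,2) 2] by blast
    have "?D z < ?D y" using Hd_mono[OF h(1-3) z(2)] z 2 h by auto
    hence "(y - x) * ?D z < (y - x) * ?D y" using 2 by (intro mult_strict_left_mono) auto
    then show ?thesis using z by (simp add: algebra_simps)
  next
    case 3
    define e where "e = min x (-y) / 2"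
    have e: "0 < e" "e < x" "y < -e" using 3 unfolding e_def by auto
    obtain z1 where z1: "e < z1" "z1 < x" "?H x - ?H e = (x - e) * ?D z1"
      using MVT_Hf[OF h(1,2) e(2)] e by blast
    obtain z2 where z2: "y < z2" "z2 < -e" "?H (-e) - ?H y = (-e - y) * ?D z2"
      using MVT_Hf[OF h(1,2) e(3)] e by auto
    have ev: "?H e - ?H (-e) = 2 * e * ?L" using Hf_even[OF h(1,2), of e] e by (simp add: field_simps)
    have L: "y * (?D y - ?L) > 0" using Hd_L0[OF h(1-3,5)] .
    hence L': "?D y < ?L" using 3 by (simp add: zero_less_mult_iff)
    have d1: "?D y < ?D z1" using Hd_mono[OF h(1-3), of y z1] z1 e h by auto
    have d2: "?D y < ?D z2" using Hd_mono[OF h(1-3), of y z2] z2 e h by auto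
    have i1: "(x - e) * ?D y < (x - e) * ?D z1" using d1 e by (intro mult_strict_left_mono) auto
    have i2: "(-e - y) * ?D y < (-e - y) * ?D z2" using d2 e by (intro mult_strict_left_mono) auto
    have i3: "(2*e) * ?D y < (2*e) * ?L" using L' e by (intro mult_strict_left_mono) auto
    have "(x - y) * ?D y = (x - e) * ?D y + (-e - y) * ?D y + (2*e) * ?D y" by (simp add: algebra_simps)
    then show ?thesis using i1 i2 i3 z1(3) z2(3) ev by linarith
  next
    case 4
    define e where "e = min (-x) y / 2"
    have e: "0 < e" "e < y" "x < -e" using 4 unfolding e_def by auto
    obtain z1 where z1: "e < z1" "z1 < y" "?H y - ?H e = (y - e) * ?D z1"
      using MVT_Hf[OF h(1,2) e(2)] e by blast
    obtain z2 where z2: "x < z2" "z2 < -e" "?H (-e) - ?H x = (-e - x) * ?D z2"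
      using MVT_Hf[OF h(1,2) e(3)] e by auto
    have ev: "?H e - ?H (-e) = 2 * e * ?L" using Hf_even[OF h(1,2), of e] e by (simp add: field_simps)
    have L: "y * (?D y - ?L) > 0" using Hd_L0[OF h(1-3,5)] .
    hence L': "?L < ?D y" using 4 by (simp add: zero_less_mult_iff)
    have d1: "?D z1 < ?D y" using Hd_mono[OF h(1-3), of z1 y] z1 e h by auto
    have d2: "?D z2 < ?D y" using Hd_mono[OF h(1-3), of z2 y] z2 e h 4 by auto
    have i1: "(y - e) * ?D z1 < (y - e) * ?D y" using d1 e by (intro mult_strict_left_mono) auto
    have i2: "(-e - x) * ?D z2 < (-e - x) * ?D y" using d2 e by (intro mult_strict_left_mono) auto
    have i3: "(2*e) * ?L < (2*e) * ?D y" using L' e by (intro mult_strict_left_mono) auto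
    have "(y - x) * ?D y = (y - e) * ?D y + (-e - x) * ?D y + (2*e) * ?D y" by (simp add: algebra_simps)
    then have "?H y - ?H x < (y - x) * ?D y" using i1 i2 i3 z1(3) z2(3) ev by linarith
    then show ?thesis by (simp add: algebra_simps)
  qed
qed


lemma g1: "s \<noteq> 0 \<Longrightarrow> A \<noteq> 0 \<Longrightarrow> C \<noteq> 0 \<Longrightarrow> N/(s*A)/(M/(s*C)) = C/A * (N/(M::real))"
  by (simp add: field_simps)
lemma g2: "E \<noteq> 0 \<Longrightarrow> Q \<noteq> 0 \<Longrightarrow> E * (P + k * Q) / (E * Q) = P / Q + (k::real)"
  by (simp add: field_simps)
lemma identric_exp0: "(u::real) > 0 \<Longrightarrow> v > 0 \<Longrightarrow>
   1 / exp 1 * ((u powr u) / (v powr v)) powr (1/(u-v)) = exp ((u * ln u - v * ln v) / (u - v) - 1)"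
proof -
  assume h: "u > 0" "v > 0"
  have pu: "u powr u = exp (u * ln u)" "v powr v = exp (v * ln v)" using h by (simp_all add: powr_def)
  have "(u powr u) / (v powr v) = exp (u * ln u - v * ln v)" unfolding pu by (simp add: exp_diff)
  moreover have "exp w powr r = exp (r * w)" for w r :: real by (simp add: powr_def)
  ultimately have "((u powr u) / (v powr v)) powr (1/(u-v)) = exp ((u * ln u - v * ln v) / (u - v))"
    by simp
  then show ?thesis by (simp add: exp_diff)
qed

lemma powr_ratio: "X > 0 \<Longrightarrow> Y > 0 \<Longrightarrow> p \<noteq> 0 \<Longrightarrow> (X powr (1/p) / Y powr (1/p)) powr p = X / (Y::real)"
proof -
  assume h: "X > 0" "Y > 0" "p \<noteq> 0"
  have "(X powr (1/p) / Y powr (1/p)) powr p = (X powr (1/p)) powr p / (Y powr (1/p)) powr p"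
    using h by (auto intro: powr_divide)
  also have "\<dots> = X / Y" using h by (simp add: powr_powr)
  finally show ?thesis .
qed


lemma eq_case: "b < a \<Longrightarrow> d < c \<Longrightarrow> c - d = a - b \<Longrightarrow> x \<noteq> 0 \<Longrightarrow> y \<noteq> 0 \<Longrightarrow>
   Hf a b c d x - Hf a b c d y = (x - y) * Hd a b c d y"
proof -
  assume h: "b < a" "d < c" "c - d = a - b" "x \<noteq> 0" "y \<noteq> 0"
  define k where "k = a - c"
  have a: "a = c + k" and b: "b = d + k" unfolding k_def using h by auto
  have Hf: "Hf a b c d s = s * k" if "s \<noteq> 0" for s
  proof -
    have n: "exp (s*c) - exp (s*d) \<noteq> 0" using diff_ne h that by auto
    have "(exp (s*a) - exp (s*b)) = exp (s*k) * (exp (s*c) - exp (s*d))"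
      unfolding a b by (simp add: distrib_left exp_add algebra_simps)
    then show ?thesis unfolding Hf_def using n by simp
  qed
  have Hd: "Hd a b c d y = k"
  proof -
    have n: "exp (y*c) - exp (y*d) \<noteq> 0" using diff_ne h by auto
    have "Mf a b y = (exp (y*k) * (exp (y*c) * c - exp (y*d) * d + k * (exp (y*c) - exp (y*d))))
         / (exp (y*k) * (exp (y*c) - exp (y*d)))"
      unfolding Mf_def a b by (simp add: distrib_left exp_add algebra_simps)
    also have "\<dots> = Mf c d y + k" unfolding Mf_def using n by (intro g2) auto
    finally show ?thesis unfolding Hd_def by simp
  qed
  show ?thesis unfolding Hf[OF h(4)] Hf[OF h(5)] Hd by (simp only: left_diff_distrib)
qed

lemma Hf_swap: "Hf c d a b s = - Hf a b c d s"
proof -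
  have r: "(exp (s*c) - exp (s*d)) / (exp (s*a) - exp (s*b)) = inverse ((exp (s*a) - exp (s*b)) / (exp (s*c) - exp (s*d)))"
    by simp
  show ?thesis unfolding Hf_def r by (rule ln_inverse)
qed

lemma Hd_swap: "Hd c d a b s = - Hd a b c d s"
  unfolding Hd_def by simp

lemma identric_exp: "u > 0 \<Longrightarrow> v > 0 \<Longrightarrow> u \<noteq> v \<Longrightarrow>
   identric u v = exp ((u * ln u - v * ln v) / (u - v) - 1)"
  unfolding identric_def using identric_exp0[of u v] by simp

lemma plog_pow: "b < a \<Longrightarrow> 0 < b \<Longrightarrow> d < c \<Longrightarrow> 0 < d \<Longrightarrow> p \<noteq> 0 \<Longrightarrow> p \<noteq> -1 \<Longrightarrow>
  (plog_mean p a b / plog_mean p c d) powr p = ((c-d)/(a-b)) * exp (Hf (ln a) (ln b) (ln c) (ln d) (p+1))"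
proof -
  assume h: "b < a" "0 < b" "d < c" "0 < d" "p \<noteq> 0" "p \<noteq> -1"
  define s where "s = p + 1"
  have s0: "s \<noteq> 0" unfolding s_def using h by auto
  have lab: "ln b < ln a" "ln d < ln c" using h by auto
  have pw: "x powr s = exp (s * ln x)" if "x > 0" for x using that by (simp add: powr_def)
  define Na where "Na = exp (s * ln a) - exp (s * ln b)"
  define Nc where "Nc = exp (s * ln c) - exp (s * ln d)"
  have rp: "Na / Nc > 0" unfolding Na_def Nc_def using ratio_pos[OF lab s0] .
  have Xa: "Na / (s * (a - b)) > 0"
  proof (cases "s > 0")
    case True
    have "exp (s * ln b) < exp (s * ln a)" using True lab by simp
    then show ?thesis unfolding Na_def using True h by (intro divide_pos_pos) auto
  next
    case False
    hence "s < 0" using s0 by simp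
    have "exp (s * ln b) > exp (s * ln a)" using \<open>s<0\<close> lab by simp
    hence n: "Na < 0" unfolding Na_def by simp
    have "s * (a - b) < 0" using \<open>s<0\<close> h by (intro mult_neg_pos) auto
    then show ?thesis using n by (intro divide_neg_neg)
  qed
  have Xc: "Nc / (s * (c - d)) > 0"
  proof (cases "s > 0")
    case True
    have "exp (s * ln d) < exp (s * ln c)" using True lab by simp
    then show ?thesis unfolding Nc_def using True h by (intro divide_pos_pos) auto
  next
    case False
    hence "s < 0" using s0 by simp
    have "exp (s * ln d) > exp (s * ln c)" using \<open>s<0\<close> lab by simp
    hence n: "Nc < 0" unfolding Nc_def by simp
    have "s * (c - d) < 0" using \<open>s<0\<close> h by (intro mult_neg_pos) auto
    then show ?thesis using n by (intro divide_neg_neg)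
  qed
  have pa: "plog_mean p a b = (Na / (s * (a - b))) powr (1/p)"
    unfolding plog_mean_def Na_def s_def using h pw[of a] pw[of b] by (simp add: s_def)
  have pc: "plog_mean p c d = (Nc / (s * (c - d))) powr (1/p)"
    unfolding plog_mean_def Nc_def s_def using h pw[of c] pw[of d] by (simp add: s_def)
  have "(plog_mean p a b / plog_mean p c d) powr p
     = (Na / (s * (a - b))) / (Nc / (s * (c - d)))"
    unfolding pa pc using Xa Xc h by (intro powr_ratio)
  also have "\<dots> = ((c-d)/(a-b)) * (Na / Nc)" using s0 h by (intro g1) auto
  also have "Na / Nc = exp (Hf (ln a) (ln b) (ln c) (ln d) (p+1))"
    unfolding Hf_def Na_def Nc_def s_def using rp[unfolded Na_def Nc_def s_def] by simp
  finally show ?thesis .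
qed


lemma ident_ratio: "b < a \<Longrightarrow> 0 < b \<Longrightarrow> d < c \<Longrightarrow> 0 < d \<Longrightarrow> s \<noteq> 0 \<Longrightarrow>
  identric (a powr s) (b powr s) / identric (c powr s) (d powr s) = exp (s * Hd (ln a) (ln b) (ln c) (ln d) s)"
proof -
  assume h: "b < a" "0 < b" "d < c" "0 < d" "s \<noteq> 0"
  have lab: "ln b < ln a" "ln d < ln c" using h by auto
  have one: "identric (x powr s) (y powr s) = exp (s * Mf (ln x) (ln y) s - 1)"
    if xy: "y < x" "0 < y" for x y :: real
  proof -
    have pw: "x powr s = exp (s * ln x)" "y powr s = exp (s * ln y)" using xy by (simp_all add: powr_def)
    have ne: "exp (s * ln x) - exp (s * ln y) \<noteq> 0" using diff_ne[of "ln y" "ln x" s] xy h by auto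
    hence ne2: "exp (s * ln x) \<noteq> exp (s * ln y)" by simp
    have "identric (x powr s) (y powr s)
       = exp ((exp (s * ln x) * (s * ln x) - exp (s * ln y) * (s * ln y)) / (exp (s * ln x) - exp (s * ln y)) - 1)"
      unfolding pw using ne2 by (subst identric_exp) auto
    also have "(exp (s * ln x) * (s * ln x) - exp (s * ln y) * (s * ln y)) / (exp (s * ln x) - exp (s * ln y))
       = s * Mf (ln x) (ln y) s" unfolding Mf_def by (simp add: algebra_simps)
    finally show ?thesis .
  qed
  show ?thesis unfolding one[OF h(1,2)] one[OF h(3,4)] Hd_def
    by (simp add: exp_diff[symmetric] algebra_simps)
qed

lemma ident_pow: "b < a \<Longrightarrow> 0 < b \<Longrightarrow> d < c \<Longrightarrow> 0 < d \<Longrightarrow> q \<noteq> -1 \<Longrightarrow>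
  (identric (a powr (q + 1)) (b powr (q + 1)) / identric (c powr (q + 1)) (d powr (q + 1)))
             powr ((p - q) / (q + 1)) = exp ((p - q) * Hd (ln a) (ln b) (ln c) (ln d) (q+1))"
proof -
  assume h: "b < a" "0 < b" "d < c" "0 < d" "q \<noteq> -1"
  have s: "q + 1 \<noteq> 0" using h by auto
  show ?thesis unfolding ident_ratio[OF h(1-4) s]
    using s by (simp add: powr_def)
qed

lemma ln_cmp: "0 < a \<Longrightarrow> 0 < b \<Longrightarrow> 0 < c \<Longrightarrow> 0 < (d::real) \<Longrightarrow>
   (a * d - b * c > 0) = (ln c - ln d < ln a - ln b)"
proof -
  assume h: "0 < a" "0 < b" "0 < c" "0 < d"
  have "(a * d - b * c > 0) = (b * c < a * d)" by simp
  also have "\<dots> = (ln (b*c) < ln (a*d))" using h by simp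
  also have "\<dots> = (ln c - ln d < ln a - ln b)" using h by (simp add: ln_mult) linarith
  finally show ?thesis .
qed

lemma ln_cmp_eq: "0 < a \<Longrightarrow> 0 < b \<Longrightarrow> 0 < c \<Longrightarrow> 0 < (d::real) \<Longrightarrow>
   (a * d - b * c = 0) = (ln c - ln d = ln a - ln b)"
proof -
  assume h: "0 < a" "0 < b" "0 < c" "0 < d"
  have "(a * d - b * c = 0) = (b * c = a * d)" by auto
  also have "\<dots> = (ln (b*c) = ln (a*d))" using h by simp
  also have "\<dots> = (ln c - ln d = ln a - ln b)" using h by (simp add: ln_mult) linarith
  finally show ?thesis .
qed

theorem theorem3p3:
  fixes a b c d p q :: real
  assumes "a > b" "b \<ge> c" "c > d" "d > 0"
    and "p \<noteq> 0" "p \<noteq> -1" "q \<noteq> 0" "q \<noteq> -1"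
  shows "(a * d - b * c > 0 \<longrightarrow>
           (plog_mean p a b / plog_mean p c d) powr p \<ge>
           (plog_mean q a b / plog_mean q c d) powr q *
           (identric (a powr (q + 1)) (b powr (q + 1)) / identric (c powr (q + 1)) (d powr (q + 1)))
             powr ((p - q) / (q + 1)))
       \<and> (a * d - b * c < 0 \<longrightarrow>
           (plog_mean p a b / plog_mean p c d) powr p \<le>
           (plog_mean q a b / plog_mean q c d) powr q *
           (identric (a powr (q + 1)) (b powr (q + 1)) / identric (c powr (q + 1)) (d powr (q + 1)))
             powr ((p - q) / (q + 1)))
       \<and> ((plog_mean p a b / plog_mean p c d) powr p =
           (plog_mean q a b / plog_mean q c d) powr q *
           (identric (a powr (q + 1)) (b powr (q + 1)) / identric (c powr (q + 1)) (d powr (q + 1)))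
             powr ((p - q) / (q + 1))
          \<longleftrightarrow> a * d - b * c = 0 \<or> p = q)"
proof -
  have b0: "0 < b" "0 < c" "0 < a" using assms by auto
  define A where "A = ln a"
  define B where "B = ln b"
  define C where "C = ln c"
  define D where "D = ln d"
  define x where "x = p + 1"
  define y where "y = q + 1"
  define K where "K = (c - d) / (a - b)"
  have K0: "K > 0" unfolding K_def using assms by simp
  have x0: "x \<noteq> 0" and y0: "y \<noteq> 0" unfolding x_def y_def using assms by auto
  have xy: "x - y = p - q" unfolding x_def y_def by simp
  have lab: "B < A" "D < C" unfolding A_def B_def C_def D_def using assms b0 by auto
  have L: "(plog_mean p a b / plog_mean p c d) powr p = K * exp (Hf A B C D x)"
    unfolding K_def A_def B_def C_def D_def x_def using plog_pow assms b0 by simp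
  have R: "(plog_mean q a b / plog_mean q c d) powr q *
           (identric (a powr (q + 1)) (b powr (q + 1)) / identric (c powr (q + 1)) (d powr (q + 1)))
             powr ((p - q) / (q + 1)) = K * exp (Hf A B C D y + (x - y) * Hd A B C D y)"
    unfolding K_def A_def B_def C_def D_def y_def x_def
    using plog_pow[of b a d c q] ident_pow[of b a d c q p] assms b0 by (simp add: exp_add)
  define \<Delta> where "\<Delta> = Hf A B C D x - (Hf A B C D y + (x - y) * Hd A B C D y)"
  have ge: "(K * exp (Hf A B C D x) \<ge> K * exp (Hf A B C D y + (x - y) * Hd A B C D y)) = (\<Delta> \<ge> 0)"
    unfolding \<Delta>_def using K0 by simp
  have le: "(K * exp (Hf A B C D x) \<le> K * exp (Hf A B C D y + (x - y) * Hd A B C D y)) = (\<Delta> \<le> 0)"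
    unfolding \<Delta>_def using K0 by simp
  have eq: "(K * exp (Hf A B C D x) = K * exp (Hf A B C D y + (x - y) * Hd A B C D y)) = (\<Delta> = 0)"
    unfolding \<Delta>_def using K0 by simp
  have pos: "\<Delta> > 0" if "a * d - b * c > 0" "p \<noteq> q"
  proof -
    have "C - D < A - B" using that ln_cmp[of a b c d] b0 assms unfolding A_def B_def C_def D_def by simp
    moreover have "x \<noteq> y" using that xy by simp
    ultimately show ?thesis unfolding \<Delta>_def using tangent[OF lab(1,2) _ x0 y0] by simp
  qed
  have neg: "\<Delta> < 0" if "a * d - b * c < 0" "p \<noteq> q"
  proof -
    have "\<not> (C - D < A - B)" "\<not> (C - D = A - B)"
      using that ln_cmp[of a b c d] ln_cmp_eq[of a b c d] b0 assms unfolding A_def B_def C_def D_def by auto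
    hence "A - B < C - D" by simp
    moreover have "x \<noteq> y" using that xy by simp
    ultimately have "Hf C D A B x - Hf C D A B y > (x - y) * Hd C D A B y"
      using tangent[OF lab(2,1) _ x0 y0] by simp
    then show ?thesis unfolding \<Delta>_def Hf_swap[of C D A B] Hd_swap[of C D A B] by simp
  qed
  have zero: "\<Delta> = 0" if "a * d - b * c = 0 \<or> p = q"
  proof (cases "p = q")
    case True
    then show ?thesis unfolding \<Delta>_def x_def y_def by simp
  next
    case False
    hence "C - D = A - B" using that ln_cmp_eq[of a b c d] b0 assms unfolding A_def B_def C_def D_def by auto
    then show ?thesis unfolding \<Delta>_def using eq_case[OF lab(1,2) _ x0 y0] by simp
  qed
  show ?thesis unfolding L R ge le eq
  proof (intro conjI impI iffI)
    assume "a * d - b * c > 0" then show "\<Delta> \<ge> 0" using pos zero by (cases "p = q") auto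
  next
    assume "a * d - b * c < 0" then show "\<Delta> \<le> 0" using neg zero by (cases "p = q") auto
  next
    assume "\<Delta> = 0" then show "a * d - b * c = 0 \<or> p = q"
      using pos neg by (metis less_irrefl linorder_neqE_linordered_idom)
  next
    assume "a * d - b * c = 0 \<or> p = q" then show "\<Delta> = 0" using zero by simp
  qed
qed

end
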